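(* Let $n\ge 1$ and let $\varphi$ be a tame automorphism of $\mathbf{C}[x_1,\dots,x_{n+1}]$. For $q\in\mathbf{C}[x_1,\dots,x_n]$, let $\varphi_q$ be the $\mathbf{C}$-algebra endomorphism of $\mathbf{C}[x_1,\dots,x_n]$ sending $x_i$ ($1\le i\le n$) to the polynomial obtained from $\varphi(x_i)$ by substituting $q$ for $x_{n+1}$. Then there exists $q\in\mathbf{C}[x_1,\dots,x_n]$ such that $\varphi_q$ is injective.
   Context: An automorphism of $\mathbf{C}[x_1,\dots,x_N]$ is elementary if it fixes all variables except one, $x_i$, and maps $x_i$ to $x_i + f(x_1,\dots,x_{i-1},x_{i+1},\dots,x_N)$; it is tame if it is a composition of elementary and linear automorphisms. *)

theory Defs
  imports Complex_Main "HOL-Library.Poly_Mapping"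
begin

text \<open>Multivariate polynomials over the complex numbers in the variables
  x_0, x_1, x_2, ... (0-indexed): a monomial is a finitely supported exponent
  vector nat =>0 nat, a polynomial a finitely supported coefficient map.
  Multiplication is the convolution product from Poly_Mapping.\<close>

type_synonym mpoly = "(nat \<Rightarrow>\<^sub>0 nat) \<Rightarrow>\<^sub>0 complex"

definition mpolys :: "nat \<Rightarrow> mpoly set" where
  "mpolys N = {p :: mpoly. \<forall>m\<in>Poly_Mapping.keys p. Poly_Mapping.keys m \<subseteq> {..<N}}"

definition Var :: "nat \<Rightarrow> mpoly" where
  "Var i = Poly_Mapping.single (Poly_Mapping.single i 1) 1"

definition Const :: "complex \<Rightarrow> mpoly" where
  "Const c = Poly_Mapping.single 0 c"

definition subst :: "(nat \<Rightarrow> mpoly) \<Rightarrow> mpoly \<Rightarrow> mpoly" where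
  "subst s p = (\<Sum>m\<in>Poly_Mapping.keys p. Const (Poly_Mapping.lookup p m) * (\<Prod>i\<in>Poly_Mapping.keys m. s i ^ Poly_Mapping.lookup m i))"

text \<open>Tame automorphisms of C[x_0,...,x_{N-1}], represented by the images
  of the variables (variables x_i with i >= N are mapped to themselves).\<close>
inductive tame :: "nat \<Rightarrow> (nat \<Rightarrow> mpoly) \<Rightarrow> bool" for N :: nat where
  elementary: "\<lbrakk> i < N; f \<in> mpolys N; \<forall>m\<in>Poly_Mapping.keys f. Poly_Mapping.lookup m i = 0 \<rbrakk>
      \<Longrightarrow> tame N (Var(i := Var i + f))"
| linear: "\<lbrakk> \<forall>j<N. \<forall>k<N. (\<Sum>l<N. A j l * B l k) = (if j = k then 1 else 0) \<rbrakk>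
      \<Longrightarrow> tame N (\<lambda>j. if j < N then (\<Sum>k<N. Const (A j k) * Var k) else Var j)"
| comp: "\<lbrakk> tame N \<sigma>; tame N \<tau> \<rbrakk> \<Longrightarrow> tame N (\<lambda>j. subst \<sigma> (\<tau> j))"

end

theory Submission
  imports Defs
begin

abbreviation lk where "lk \<equiv> Poly_Mapping.lookup"
abbreviation ks where "ks \<equiv> Poly_Mapping.keys"
abbreviation sg where "sg \<equiv> Poly_Mapping.single"

definition mon :: "(nat \<Rightarrow> mpoly) \<Rightarrow> (nat \<Rightarrow>\<^sub>0 nat) \<Rightarrow> mpoly" where
  "mon s m = (\<Prod>i\<in>ks m. s i ^ lk m i)"

lemma subst_mono: "subst s p = (\<Sum>m\<in>ks p. Const (lk p m) * mon s m)"
  by (simp add: subst_def mon_def)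

lemma Const_0[simp]: "Const 0 = 0" by (simp add: Const_def)
lemma Const_1[simp]: "Const 1 = 1" by (simp add: Const_def)
lemma Const_add: "Const (a + b) = Const a + Const b" by (simp add: Const_def single_add)
lemma Const_mult: "Const (a * b) = Const a * Const b" by (simp add: Const_def mult_single)
lemma Const_sum: "Const (sum f S) = (\<Sum>x\<in>S. Const (f x))"
  by (induction S rule: infinite_finite_induct) (auto simp: Const_add)

lemma subst_superset:
  assumes "finite S" "ks p \<subseteq> S"
  shows "subst s p = (\<Sum>m\<in>S. Const (lk p m) * mon s m)"
  unfolding subst_mono
  by (rule sum.mono_neutral_left) (use assms in \<open>auto simp: in_keys_iff\<close>)

lemma mono_superset:
  assumes "finite S" "ks m \<subseteq> S"
  shows "mon s m = (\<Prod>i\<in>S. s i ^ lk m i)"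
  unfolding mon_def
  by (rule prod.mono_neutral_left) (use assms in \<open>auto simp: in_keys_iff\<close>)

lemma subst_add: "subst s (p + q) = subst s p + subst s q"
proof -
  let ?S = "ks p \<union> ks q"
  have "subst s (p + q) = (\<Sum>m\<in>?S. Const (lk (p+q) m) * mon s m)"
    by (rule subst_superset) (use keys_add[of p q] keys_add[of m m'] in auto)
  also have "\<dots> = (\<Sum>m\<in>?S. Const (lk p m) * mon s m) + (\<Sum>m\<in>?S. Const (lk q m) * mon s m)"
    by (simp add: lookup_add Const_add distrib_right sum.distrib)
  also have "\<dots> = subst s p + subst s q"
    by (simp add: subst_superset[symmetric])
  finally show ?thesis .
qed

lemma subst_0[simp]: "subst s 0 = 0" by (simp add: subst_def)

lemma subst_uminus: "subst s (- p) = - subst s p"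
  using subst_add[of s "-p" p] by (simp add: eq_neg_iff_add_eq_0)

lemma subst_diff: "subst s (p - q) = subst s p - subst s q"
  using subst_add[of s p "-q"] by (simp add: subst_uminus)

lemma subst_sum: "subst s (sum f S) = (\<Sum>x\<in>S. subst s (f x))"
  by (induction S rule: infinite_finite_induct) (auto simp: subst_add)

lemma subst_single: "subst s (sg m c) = Const c * mon s m"
  by (simp add: subst_def mon_def)

lemma mono_add: "mon s (m + m') = mon s m * mon s m'"
proof -
  let ?S = "ks m \<union> ks m'"
  have "mon s (m + m') = (\<Prod>i\<in>?S. s i ^ lk (m+m') i)"
    by (rule mono_superset) (use keys_add[of p q] keys_add[of m m'] in auto)
  also have "\<dots> = (\<Prod>i\<in>?S. s i ^ lk m i) * (\<Prod>i\<in>?S. s i ^ lk m' i)"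
    by (simp add: lookup_add power_add prod.distrib)
  also have "\<dots> = mon s m * mon s m'"
    by (simp add: mono_superset[symmetric])
  finally show ?thesis .
qed

lemma pm_decomp: "(p::'a \<Rightarrow>\<^sub>0 'b::comm_monoid_add) = (\<Sum>k\<in>ks p. sg k (lk p k))"
proof (rule poly_mapping_eqI)
  fix x
  have "lk (\<Sum>k\<in>ks p. sg k (lk p k)) x = (\<Sum>k\<in>ks p. (lk p k when k = x))"
    by (simp add: lookup_sum lookup_single)
  also have "\<dots> = lk p x"
    by (cases "x \<in> ks p") (auto simp: in_keys_iff when_def)
  finally show "lk p x = lk (\<Sum>k\<in>ks p. sg k (lk p k)) x" by simp
qed

lemma subst_mult: "subst s (p * q) = subst s p * subst s q"
proof -
  have "p * q = (\<Sum>m\<in>ks p. sg m (lk p m)) * (\<Sum>m'\<in>ks q. sg m' (lk q m'))"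
    using pm_decomp[of p] pm_decomp[of q] by simp
  also have "\<dots> = (\<Sum>m\<in>ks p. \<Sum>m'\<in>ks q. sg (m + m') (lk p m * lk q m'))"
    by (simp add: sum_product mult_single)
  finally have "subst s (p * q) = (\<Sum>m\<in>ks p. \<Sum>m'\<in>ks q. Const (lk p m) * mon s m * (Const (lk q m') * mon s m'))"
    by (simp add: subst_sum subst_single mono_add Const_mult mult_ac)
  also have "\<dots> = subst s p * subst s q"
    by (simp add: subst_mono sum_product)
  finally show ?thesis .
qed

lemma subst_1[simp]: "subst s 1 = 1"
  by (simp add: subst_def)

lemma subst_Const[simp]: "subst s (Const c) = Const c"
  by (simp add: Const_def subst_single mon_def)

lemma subst_Var[simp]: "subst s (Var i) = s i"
  by (simp add: Var_def subst_single mon_def)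

lemma subst_power: "subst s (p ^ k) = subst s p ^ k"
  by (induction k) (auto simp: subst_mult)

lemma subst_prod: "subst s (prod f S) = (\<Prod>x\<in>S. subst s (f x))"
  by (induction S rule: infinite_finite_induct) (auto simp: subst_mult)

lemma subst_comp: "subst (\<lambda>j. subst a (b j)) p = subst a (subst b p)"
  by (simp add: subst_mono[of b] subst_mono[of "\<lambda>j. subst a (b j)"] subst_sum subst_mult mon_def subst_prod subst_power)

lemma Var_power: "Var i ^ e = sg (sg i e) 1"
  by (induction e) (auto simp: Var_def mult_single single_add[symmetric])

lemma prod_single1: "(\<Prod>i\<in>S. sg (f i) (1::complex)) = sg (\<Sum>i\<in>S. f i) 1"
  by (induction S rule: infinite_finite_induct) (auto simp: mult_single)

lemma mono_Var: "mon Var m = sg m 1"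
  unfolding mon_def Var_power prod_single1 using pm_decomp[of m] by simp

lemma subst_Var_id: "subst Var p = p"
proof -
  have "subst Var p = (\<Sum>m\<in>ks p. sg m (lk p m))"
    by (simp add: subst_mono mono_Var Const_def mult_single)
  then show ?thesis using pm_decomp[of p] by simp
qed

lemma subst_cong:
  assumes "\<And>m i. m \<in> ks p \<Longrightarrow> i \<in> ks m \<Longrightarrow> s i = t i"
  shows "subst s p = subst t p"
  unfolding subst_def using assms by (auto intro!: sum.cong prod.cong)


lemma dvd_prod_diff:
  fixes d :: "'a::comm_ring_1"
  shows "finite S \<Longrightarrow> (\<And>i. i \<in> S \<Longrightarrow> d dvd f i - g i) \<Longrightarrow> d dvd prod f S - prod g S"
proof (induction S rule: finite_induct)
  case (insert x F)
  have "prod f (insert x F) - prod g (insert x F) = f x * (prod f F - prod g F) + (f x - g x) * prod g F"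
    using insert.hyps by (simp add: algebra_simps)
  then show ?case using insert by simp
qed simp

lemma dvd_power_diff:
  fixes d :: "'a::comm_ring_1"
  shows "d dvd a - b \<Longrightarrow> d dvd a ^ e - b ^ e"
proof (induction e)
  case (Suc e)
  have "a ^ Suc e - b ^ Suc e = a * (a ^ e - b ^ e) + (a - b) * b ^ e"
    by (simp add: algebra_simps)
  then show ?case using Suc by simp
qed simp

lemma subst_dvd:
  assumes "\<And>i. d dvd s i - t i"
  shows "d dvd subst s p - subst t p"
proof -
  have "subst s p - subst t p = (\<Sum>m\<in>ks p. Const (lk p m) * (mon s m - mon t m))"
    by (simp add: subst_mono sum_subtractf algebra_simps)
  moreover have "d dvd mon s m - mon t m" for m
    unfolding mon_def by (rule dvd_prod_diff) (auto intro: dvd_power_diff assms)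
  ultimately show ?thesis by (simp add: dvd_sum)
qed

definition nox :: "nat \<Rightarrow> mpoly \<Rightarrow> bool" where
  "nox n p \<longleftrightarrow> (\<forall>m\<in>ks p. lk m n = 0)"

lemma keys_mult_deg:
  assumes "c \<in> ks (A * B)"
  shows "\<exists>a\<in>ks A. \<exists>b\<in>ks B. lk c n = lk a n + lk b n \<and> c = a + b"
proof -
  obtain a b where "a \<in> ks A" "b \<in> ks B" "c = a + b" using keys_mult[of A B] assms by blast
  then show ?thesis by (auto simp: lookup_add)
qed

lemma nox_add: "nox n a \<Longrightarrow> nox n b \<Longrightarrow> nox n (a + b)"
  unfolding nox_def using keys_add[of a b] by blast

lemma nox_diff: "nox n a \<Longrightarrow> nox n b \<Longrightarrow> nox n (a - b)"
  unfolding nox_def using keys_diff[of a b] by blast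

lemma nox_mult: "nox n a \<Longrightarrow> nox n b \<Longrightarrow> nox n (a * b)"
  unfolding nox_def by (metis add_0 keys_mult_deg)

lemma nox_Const: "nox n (Const c)"
  by (simp add: nox_def Const_def)

lemma nox_1: "nox n 1"
  by (simp add: nox_def)

lemma nox_0[simp]: "nox n 0" by (simp add: nox_def)

lemma nox_sum: "(\<And>x. x \<in> S \<Longrightarrow> nox n (f x)) \<Longrightarrow> nox n (sum f S)"
  by (induction S rule: infinite_finite_induct) (auto intro: nox_add)

lemma nox_prod: "(\<And>x. x \<in> S \<Longrightarrow> nox n (f x)) \<Longrightarrow> nox n (prod f S)"
  by (induction S rule: infinite_finite_induct) (auto simp: nox_mult nox_1)

lemma nox_power: "nox n a \<Longrightarrow> nox n (a ^ e)"
  by (induction e) (auto simp: nox_mult nox_1)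

lemma nox_subst: "(\<And>i. nox n (s i)) \<Longrightarrow> nox n (subst s p)"
  unfolding subst_mono mon_def
  by (intro nox_sum nox_mult nox_Const nox_prod nox_power) auto

lemma Var_nox: "nox n (Var j) \<longleftrightarrow> j \<noteq> n"
  by (auto simp: nox_def Var_def lookup_single)


lemma split_top:
  fixes g :: mpoly and n d :: nat
  defines "T \<equiv> (\<Sum>m\<in>{m\<in>ks g. lk m n = d}. sg m (lk g m))"
      and "L \<equiv> (\<Sum>m\<in>{m\<in>ks g. lk m n \<noteq> d}. sg m (lk g m))"
  shows "g = T + L" "ks T \<subseteq> {m\<in>ks g. lk m n = d}" "ks L \<subseteq> {m\<in>ks g. lk m n \<noteq> d}"
    "m0 \<in> ks g \<Longrightarrow> lk m0 n = d \<Longrightarrow> T \<noteq> 0"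
proof -
  have "T + L = (\<Sum>m\<in>ks g. (if lk m n = d then sg m (lk g m) else 0) + (if lk m n \<noteq> d then sg m (lk g m) else 0))"
    unfolding T_def L_def by (simp add: sum.inter_filter sum.distrib)
  also have "\<dots> = (\<Sum>m\<in>ks g. sg m (lk g m))"
    by (rule sum.cong) auto
  finally show "g = T + L" using pm_decomp[of g] by simp
  show "ks T \<subseteq> {m\<in>ks g. lk m n = d}" unfolding T_def
    using keys_sum[of "\<lambda>m. sg m (lk g m)" "{m\<in>ks g. lk m n = d}"] by auto
  show "ks L \<subseteq> {m\<in>ks g. lk m n \<noteq> d}" unfolding L_def
    using keys_sum[of "\<lambda>m. sg m (lk g m)" "{m\<in>ks g. lk m n \<noteq> d}"] by auto
  assume m0: "m0 \<in> ks g" "lk m0 n = d"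
  have "lk T m0 = (\<Sum>m\<in>{m\<in>ks g. lk m n = d}. (lk g m when m = m0))"
    unfolding T_def by (simp add: lookup_sum lookup_single)
  also have "\<dots> = lk g m0"
    using m0 by (simp add: when_def)
  finally show "T \<noteq> 0" using m0 by (auto simp: in_keys_iff)
qed

lemma involve_mult:
  fixes g h :: mpoly
  assumes g: "\<not> nox n g" and h: "h \<noteq> 0"
  shows "\<not> nox n (g * h)"
proof -
  obtain m1 where m1: "m1 \<in> ks g" "lk m1 n \<noteq> 0" using g by (auto simp: nox_def)
  define dg where "dg = Max ((\<lambda>m. lk m n) ` ks g)"
  define dh where "dh = Max ((\<lambda>m. lk m n) ` ks h)"
  have kg: "ks g \<noteq> {}" using m1 by auto
  have kh: "ks h \<noteq> {}" using h by simp
  have dgle: "\<And>m. m \<in> ks g \<Longrightarrow> lk m n \<le> dg" unfolding dg_def by (rule Max_ge) auto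
  have dhle: "\<And>m. m \<in> ks h \<Longrightarrow> lk m n \<le> dh" unfolding dh_def by (rule Max_ge) auto
  have "dg \<in> (\<lambda>m. lk m n) ` ks g"
    unfolding dg_def using kg by (intro Max_in) auto
  then obtain mg where mg: "mg \<in> ks g" "lk mg n = dg" by auto
  have "dh \<in> (\<lambda>m. lk m n) ` ks h"
    unfolding dh_def using kh by (intro Max_in) auto
  then obtain mh where mh: "mh \<in> ks h" "lk mh n = dh" by auto
  have dgpos: "dg > 0" using dgle[OF m1(1)] m1(2) by simp
  obtain tg lg where G: "g = tg + lg" "ks tg \<subseteq> {m\<in>ks g. lk m n = dg}" "ks lg \<subseteq> {m\<in>ks g. lk m n \<noteq> dg}" "tg \<noteq> 0"
    using split_top[where g=g and n=n and d=dg] mg by blast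
  obtain th lh where H: "h = th + lh" "ks th \<subseteq> {m\<in>ks h. lk m n = dh}" "ks lh \<subseteq> {m\<in>ks h. lk m n \<noteq> dh}" "th \<noteq> 0"
    using split_top[where g=h and n=n and d=dh] mh by blast
  have tgd: "\<And>m. m \<in> ks tg \<Longrightarrow> lk m n = dg" using G(2) by auto
  have lgd: "lk m n < dg" if "m \<in> ks lg" for m
  proof -
    have "m \<in> ks g" "lk m n \<noteq> dg" using G(3) that by auto
    then show ?thesis using dgle[of m] by simp
  qed
  have thd: "\<And>m. m \<in> ks th \<Longrightarrow> lk m n = dh" using H(2) by auto
  have lhd: "lk m n < dh" if "m \<in> ks lh" for m
  proof -
    have "m \<in> ks h" "lk m n \<noteq> dh" using H(3) that by auto
    then show ?thesis using dhle[of m] by simp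
  qed
  define R where "R = tg * lh + lg * th + lg * lh"
  have gh: "g * h = tg * th + R" unfolding R_def G(1) H(1) by (simp add: algebra_simps)
  have "tg * th \<noteq> 0" using G(4) H(4) by simp
  then obtain m where m: "m \<in> ks (tg * th)" by (metis keys_eq_empty ex_in_conv)
  have md: "lk m n = dg + dh" using keys_mult_deg[OF m, of n] tgd thd by auto
  have R1: "\<And>c. c \<in> ks (tg * lh) \<Longrightarrow> lk c n < dg + dh"
  proof -
    fix c assume c: "c \<in> ks (tg * lh)"
    obtain a b where "a \<in> ks tg" "b \<in> ks lh" "lk c n = lk a n + lk b n"
      using keys_mult_deg[where n=n, OF c] by blast
    then show "lk c n < dg + dh" using tgd[of a] lhd[of b] by simp
  qed
  have R2: "\<And>c. c \<in> ks (lg * th) \<Longrightarrow> lk c n < dg + dh"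
  proof -
    fix c assume c: "c \<in> ks (lg * th)"
    obtain a b where "a \<in> ks lg" "b \<in> ks th" "lk c n = lk a n + lk b n"
      using keys_mult_deg[where n=n, OF c] by blast
    then show "lk c n < dg + dh" using lgd[of a] thd[of b] by simp
  qed
  have R3: "\<And>c. c \<in> ks (lg * lh) \<Longrightarrow> lk c n < dg + dh"
  proof -
    fix c assume c: "c \<in> ks (lg * lh)"
    obtain a b where "a \<in> ks lg" "b \<in> ks lh" "lk c n = lk a n + lk b n"
      using keys_mult_deg[where n=n, OF c] by blast
    then show "lk c n < dg + dh" using lgd[of a] lhd[of b] by simp
  qed
  have "m \<notin> ks R"
  proof
    assume "m \<in> ks R"
    then have "m \<in> ks (tg * lh) \<union> ks (lg * th) \<union> ks (lg * lh)"
      unfolding R_def using keys_add[of "tg * lh + lg * th" "lg * lh"] keys_add[of "tg * lh" "lg * th"] by blast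
    then show False using R1[of m] R2[of m] R3[of m] md by auto
  qed
  then have "lk (g * h) m = lk (tg * th) m"
    unfolding gh by (simp add: lookup_add in_keys_iff)
  then have "m \<in> ks (g * h)" using m by (simp add: in_keys_iff)
  then show ?thesis using md dgpos unfolding nox_def by (metis add_is_0 not_gr0)
qed

lemma tame_inv:
  "tame N \<phi> \<Longrightarrow> \<exists>\<psi>. (\<forall>j. subst \<psi> (\<phi> j) = Var j) \<and> (\<forall>j\<ge>N. \<psi> j = Var j)"
proof (induction rule: tame.induct)
  case (elementary i f)
  define \<psi> where "\<psi> = Var(i := Var i - f)"
  have sf: "subst \<psi> f = f"
  proof -
    have "subst \<psi> f = subst Var f"
    proof (rule subst_cong)
      fix m k assume "m \<in> ks f" "k \<in> ks m"
      then have "k \<noteq> i" using elementary.hyps(3) by (auto simp: in_keys_iff)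
      then show "\<psi> k = Var k" by (simp add: \<psi>_def)
    qed
    then show ?thesis by (simp add: subst_Var_id)
  qed
  have "\<forall>j. subst \<psi> ((Var(i := Var i + f)) j) = Var j"
    by (auto simp: \<psi>_def subst_add sf[unfolded \<psi>_def])
  moreover have "\<forall>j\<ge>N. \<psi> j = Var j" using elementary.hyps(1) by (auto simp: \<psi>_def)
  ultimately show ?case by blast
next
  case (linear A B)
  define \<psi> where "\<psi> = (\<lambda>j. if j < N then (\<Sum>k<N. Const (B j k) * Var k) else Var j)"
  have "subst \<psi> (\<Sum>k<N. Const (A j k) * Var k) = Var j" if j: "j < N" for j
  proof -
    have "subst \<psi> (\<Sum>k<N. Const (A j k) * Var k) = (\<Sum>k<N. Const (A j k) * (\<Sum>l<N. Const (B k l) * Var l))"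
      by (simp add: subst_sum subst_mult \<psi>_def)
    also have "\<dots> = (\<Sum>k<N. \<Sum>l<N. Const (A j k * B k l) * Var l)"
      by (simp add: sum_distrib_left Const_mult mult.assoc)
    also have "\<dots> = (\<Sum>l<N. \<Sum>k<N. Const (A j k * B k l) * Var l)"
      by (rule sum.swap)
    also have "\<dots> = (\<Sum>l<N. Const (\<Sum>k<N. A j k * B k l) * Var l)"
      by (simp add: Const_sum sum_distrib_right)
    also have "\<dots> = (\<Sum>l<N. if l = j then Var l else 0)"
      using linear.hyps j by (intro sum.cong) auto
    also have "\<dots> = Var j" using j by simp
    finally show ?thesis .
  qed
  then have "\<forall>j. subst \<psi> (if j < N then (\<Sum>k<N. Const (A j k) * Var k) else Var j) = Var j"
    by (auto simp: \<psi>_def)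
  moreover have "\<forall>j\<ge>N. \<psi> j = Var j" by (auto simp: \<psi>_def)
  ultimately show ?case by blast
next
  case (comp \<sigma> \<tau>)
  obtain a where a: "\<forall>j. subst a (\<sigma> j) = Var j" "\<forall>j\<ge>N. a j = Var j" using comp.IH(1) by blast
  obtain b where b: "\<forall>j. subst b (\<tau> j) = Var j" "\<forall>j\<ge>N. b j = Var j" using comp.IH(2) by blast
  define \<psi> where "\<psi> = (\<lambda>j. subst b (a j))"
  have "subst \<psi> (subst \<sigma> (\<tau> j)) = Var j" for j
  proof -
    have "subst \<psi> (subst \<sigma> (\<tau> j)) = subst b (subst a (subst \<sigma> (\<tau> j)))"
      by (simp add: \<psi>_def subst_comp)
    also have "subst a (subst \<sigma> (\<tau> j)) = subst (\<lambda>k. subst a (\<sigma> k)) (\<tau> j)"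
      by (simp add: subst_comp)
    also have "\<dots> = \<tau> j" using a(1) by (simp add: subst_Var_id)
    finally show ?thesis using b(1) by simp
  qed
  moreover have "\<forall>j\<ge>N. \<psi> j = Var j" using a(2) b(2) by (simp add: \<psi>_def)
  ultimately show ?case by blast
qed

lemma main_inj:
  fixes n :: nat and \<phi> \<psi> :: "nat \<Rightarrow> mpoly" and q :: mpoly
  assumes inv: "\<forall>j. subst \<psi> (\<phi> j) = Var j"
    and G: "\<not> nox n (\<psi> n - subst \<psi> q)"
  shows "inj_on (subst (\<lambda>i. if i < n then subst (Var(n := q)) (\<phi> i) else Var i)) (mpolys n)"
proof (rule inj_onI)
  fix x y assume x: "x \<in> mpolys n" and y: "y \<in> mpolys n"
  let ?S = "\<lambda>i. if i < n then subst (Var(n := q)) (\<phi> i) else Var i"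
  assume eq: "subst ?S x = subst ?S y"
  define p where "p = x - y"
  have pm: "p \<in> mpolys n"
    using x y keys_diff[of x y] unfolding p_def mpolys_def by blast
  have "subst ?S p = 0" using eq by (simp add: p_def subst_diff)
  moreover have "subst ?S p = subst (\<lambda>i. subst (Var(n := q)) (\<phi> i)) p"
  proof (rule subst_cong)
    fix m i assume "m \<in> ks p" "i \<in> ks m"
    then have "i < n" using pm unfolding mpolys_def by blast
    then show "?S i = subst (Var(n := q)) (\<phi> i)" by simp
  qed
  ultimately have z: "subst (Var(n := q)) (subst \<phi> p) = 0" by (simp add: subst_comp)
  have "(Var n - q) dvd subst Var (subst \<phi> p) - subst (Var(n := q)) (subst \<phi> p)"
    by (rule subst_dvd) auto
  then obtain h where h: "subst \<phi> p = (Var n - q) * h"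
    using z by (auto simp: subst_Var_id elim!: dvdE)
  have "p = subst \<psi> (subst \<phi> p)"
    using inv by (simp add: subst_comp[symmetric] subst_Var_id)
  also have "\<dots> = (\<psi> n - subst \<psi> q) * subst \<psi> h"
    by (simp add: h subst_mult subst_diff)
  finally have peq: "p = (\<psi> n - subst \<psi> q) * subst \<psi> h" .
  have "nox n p"
    unfolding nox_def
  proof
    fix m assume "m \<in> ks p"
    then have "ks m \<subseteq> {..<n}" using pm by (simp add: mpolys_def)
    then have "n \<notin> ks m" by auto
    then show "lk m n = 0" by (simp add: in_keys_iff)
  qed
  have "p = 0"
  proof (rule ccontr)
    assume "p \<noteq> 0"
    then have "subst \<psi> h \<noteq> 0" using peq by auto
    then have "\<not> nox n p" using involve_mult[OF G] peq by simp
    then show False using \<open>nox n p\<close> by simp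
  qed
  then show "x = y" by (simp add: p_def)
qed

theorem proposition2p4p1:
  fixes n :: nat and \<phi> :: "nat \<Rightarrow> mpoly"
  assumes "n \<ge> 1"
    and "tame (n + 1) \<phi>"
  shows "\<exists>q \<in> mpolys n.
           inj_on (subst (\<lambda>i. if i < n then subst (Var(n := q)) (\<phi> i) else Var i)) (mpolys n)"
proof -
  obtain \<psi> where inv: "\<forall>j. subst \<psi> (\<phi> j) = Var j" and fix1: "\<forall>j\<ge>n+1. \<psi> j = Var j"
    using tame_inv[OF assms(2)] by blast
  show ?thesis
  proof (cases "nox n (\<psi> n)")
    case False
    have "0 \<in> mpolys n" by (simp add: mpolys_def)
    moreover have "\<not> nox n (\<psi> n - subst \<psi> 0)" using False by simp
    ultimately show ?thesis using main_inj[OF inv] by blast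
  next
    case True
    have "\<exists>i<n. \<not> nox n (\<psi> i)"
    proof (rule ccontr)
      assume "\<not> ?thesis"
      then have all: "nox n (\<psi> j)" for j
        using True fix1 Var_nox[of n j] by (cases "j < n"; cases "j = n") auto
      have "nox n (subst \<psi> (\<phi> n))" by (rule nox_subst) (rule all)
      then show False using inv Var_nox[of n n] by simp
    qed
    then obtain i where i: "i < n" "\<not> nox n (\<psi> i)" by blast
    have "Var i \<in> mpolys n" using i by (simp add: mpolys_def Var_def)
    moreover have "\<not> nox n (\<psi> n - subst \<psi> (Var i))"
    proof
      assume "nox n (\<psi> n - subst \<psi> (Var i))"
      then have "nox n (\<psi> n - \<psi> i)" by simp
      from nox_diff[OF True this] have "nox n (\<psi> n - (\<psi> n - \<psi> i))" .
      then show False using i by simp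
    qed
    ultimately show ?thesis using main_inj[OF inv] by blast
  qed
qed

end
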